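(* Let $A\in\mathscr{B}(\Omega)$ satisfy $\underline{P}(A)=0$ and $\overline{P}(A)=1$. Then for any $B\in\mathscr{B}(\Omega)$ with $\underline{P}(B)>0$, $$\underline{P}_{\mathfrak{G}}(A\mid B)=0,\quad\overline{P}_{\mathfrak{G}}(A\mid B)=1,\quad \underline{P}_{\mathfrak{B}}(A\mid B)=0,\quad\overline{P}_{\mathfrak{B}}(A\mid B)=1.$$
   Context: $\Omega$ is a separable, completely metrizable space with Borel $\sigma$-algebra $\mathscr{B}(\Omega)$; $\underline{P}$ is a Choquet capacity of order 2 on $\mathscr{B}(\Omega)$ (a coherent lower probability with weakly compact set of dominating measures satisfying $\underline{P}(A\cup B)\ge\underline{P}(A)+\underline{P}(B)-\underline{P}(A\cap B)$); $\Pi=\{P:P\ge\underline{P}\}$, $\underline{P}(A)=\inf_{P\in\Pi}P(A)$, $\overline{P}(A)=\sup_{P\in\Pi}P(A)=1-\underline{P}(A^c)$. Generalized Bayes rule: $\underline{P}_{\mathfrak{B}}(A\mid B)=\inf_{P\in\Pi}P(A\cap B)/P(B)$, $\overline{P}_{\mathfrak{B}}(A\mid B)=\sup_{P\in\Pi}P(A\cap B)/P(B)$. Geometric rule: $\underline{P}_{\mathfrak{G}}(A\mid B)=\inf_{P\in\Pi}P(A\cap B)/\inf_{P\in\Pi}P(B)$, $\overline{P}_{\mathfrak{G}}(A\mid B)=1-\underline{P}_{\mathfrak{G}}(A^c\mid B)$. *)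

theory Defs
  imports "HOL-Probability.Probability"
begin

text \<open>Omega is modelled by a type of class polish_space (separable, complete metric),
  with Borel sigma-algebra sets borel.\<close>

definition prob_borel :: "'a::topological_space measure \<Rightarrow> bool" where
  "prob_borel P \<longleftrightarrow> prob_space P \<and> sets P = sets (borel :: 'a measure)"

definition credal :: "('a::topological_space set \<Rightarrow> real) \<Rightarrow> 'a measure set" where
  "credal lp = {P. prob_borel P \<and> (\<forall>A\<in>sets borel. lp A \<le> measure P A)}"

definition weak_conv :: "(nat \<Rightarrow> 'a::topological_space measure) \<Rightarrow> 'a measure \<Rightarrow> bool" where
  "weak_conv Ps P \<longleftrightarrow> (\<forall>f :: 'a \<Rightarrow> real. continuous_on UNIV f \<and> bounded (range f) \<longrightarrow>
      (\<lambda>n. integral\<^sup>L (Ps n) f) \<longlonglongrightarrow> integral\<^sup>L P f)"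

text \<open>Weak compactness (sequential; the weak topology on probability measures on a Polish space
  is metrizable, so this agrees with compactness).\<close>
definition weakly_seq_compact :: "'a::topological_space measure set \<Rightarrow> bool" where
  "weakly_seq_compact S \<longleftrightarrow> (\<forall>Ps. (\<forall>n. Ps n \<in> S) \<longrightarrow>
      (\<exists>(r::nat \<Rightarrow> nat) P. strict_mono r \<and> P \<in> S \<and> weak_conv (Ps \<circ> r) P))"

definition choquet2 :: "('a::topological_space set \<Rightarrow> real) \<Rightarrow> bool" where
  "choquet2 lp \<longleftrightarrow>
     credal lp \<noteq> {} \<and>
     (\<forall>A\<in>sets borel. lp A = (INF P\<in>credal lp. measure P A)) \<and>
     weakly_seq_compact (credal lp) \<and>
     (\<forall>A\<in>sets borel. \<forall>B\<in>sets borel. lp (A \<union> B) \<ge> lp A + lp B - lp (A \<inter> B))"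

definition upper_prob :: "('a::topological_space set \<Rightarrow> real) \<Rightarrow> 'a set \<Rightarrow> real" where
  "upper_prob lp A = (SUP P\<in>credal lp. measure P A)"

definition lower_bayes :: "('a::topological_space set \<Rightarrow> real) \<Rightarrow> 'a set \<Rightarrow> 'a set \<Rightarrow> real" where
  "lower_bayes lp A B = (INF P\<in>credal lp. measure P (A \<inter> B) / measure P B)"

definition upper_bayes :: "('a::topological_space set \<Rightarrow> real) \<Rightarrow> 'a set \<Rightarrow> 'a set \<Rightarrow> real" where
  "upper_bayes lp A B = (SUP P\<in>credal lp. measure P (A \<inter> B) / measure P B)"

definition lower_geom :: "('a::topological_space set \<Rightarrow> real) \<Rightarrow> 'a set \<Rightarrow> 'a set \<Rightarrow> real" where
  "lower_geom lp A B = (INF P\<in>credal lp. measure P (A \<inter> B)) / (INF P\<in>credal lp. measure P B)"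

definition upper_geom :: "('a::topological_space set \<Rightarrow> real) \<Rightarrow> 'a set \<Rightarrow> 'a set \<Rightarrow> real" where
  "upper_geom lp A B = 1 - lower_geom lp (- A) B"

end

theory Submission
  imports Defs
begin

lemma inf0:
  fixes f :: "'b \<Rightarrow> real"
  assumes "S \<noteq> {}" "\<forall>P\<in>S. 0 \<le> f P" "\<forall>e>0. \<exists>P\<in>S. f P < e"
  shows "(INF P\<in>S. f P) = 0"
proof -
  have bb: "bdd_below (f ` S)" using assms(2) by (auto intro: bdd_belowI2)
  have ge: "0 \<le> (INF P\<in>S. f P)" using assms(1,2) by (auto intro: cINF_greatest)
  show ?thesis
  proof (rule ccontr)
    assume "(INF P\<in>S. f P) \<noteq> 0"
    then have "(INF P\<in>S. f P) > 0" using ge by simp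
    then obtain P where "P \<in> S" "f P < (INF P\<in>S. f P)" using assms(3) by blast
    moreover have "(INF P\<in>S. f P) \<le> f P" using bb \<open>P \<in> S\<close> by (rule cINF_lower)
    ultimately show False by simp
  qed
qed

lemma sup1:
  fixes f :: "'b \<Rightarrow> real"
  assumes "S \<noteq> {}" "\<forall>P\<in>S. f P \<le> 1" "\<forall>e>0. \<exists>P\<in>S. 1 - e < f P"
  shows "(SUP P\<in>S. f P) = 1"
proof -
  have bb: "bdd_above (f ` S)" using assms(2) by (auto intro: bdd_aboveI2)
  have le: "(SUP P\<in>S. f P) \<le> 1" using assms(1,2) by (auto intro: cSUP_least)
  show ?thesis
  proof (rule ccontr)
    assume "(SUP P\<in>S. f P) \<noteq> 1"
    then have "1 - (SUP P\<in>S. f P) > 0" using le by simp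
    then obtain P where "P \<in> S" "1 - (1 - (SUP P\<in>S. f P)) < f P" using assms(3) by blast
    moreover have "f P \<le> (SUP P\<in>S. f P)" using cSUP_upper[OF \<open>P \<in> S\<close> bb] .
    ultimately show False by simp
  qed
qed

theorem theorem5p8:
  fixes lp :: "'a::polish_space set \<Rightarrow> real" and A B :: "'a set"
  assumes "choquet2 lp"
    and "A \<in> sets borel" and "lp A = 0" and "upper_prob lp A = 1"
    and "B \<in> sets borel" and "lp B > 0"
  shows "lower_geom lp A B = 0 \<and> upper_geom lp A B = 1 \<and>
         lower_bayes lp A B = 0 \<and> upper_bayes lp A B = 1"
proof -
  let ?C = "credal lp"
  have C: "?C \<noteq> {}" and infd: "\<forall>X\<in>sets borel. lp X = (INF P\<in>?C. measure P X)"
    using assms(1) unfolding choquet2_def by auto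
  have mem: "prob_space P" "sets P = sets borel" "\<And>X. X \<in> sets borel \<Longrightarrow> lp X \<le> measure P X"
    if "P \<in> ?C" for P using that unfolding credal_def prob_borel_def by auto
  have sp: "space P = UNIV" if "P \<in> ?C" for P
    using sets_eq_imp_space_eq[OF mem(2)[OF that]] by simp
  have bnd: "0 \<le> measure P X" "measure P X \<le> 1" if "P \<in> ?C" for P X
    using prob_space.prob_le_1[OF mem(1)[OF that]] by auto
  have compl: "measure P (-X) = 1 - measure P X" if "P \<in> ?C" "X \<in> sets borel" for P X
    using prob_space.prob_compl[OF mem(1)[OF that(1)], of X] sp[OF that(1)] mem(2)[OF that(1)] that(2)
    by (simp add: Compl_eq_Diff_UNIV)
  have mono: "measure P (X \<inter> B) \<le> measure P X" if "P \<in> ?C" "X \<in> sets borel" for P X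
    using that mem[OF that(1)] assms(5)
    by (intro finite_measure.finite_measure_mono prob_space.axioms(1)) auto
  have bddA: "bdd_above ((\<lambda>P. measure P A) ` ?C)"
    using bnd(2) by (intro bdd_aboveI2) auto
  have bddbA: "bdd_below ((\<lambda>P. measure P A) ` ?C)"
    using bnd(1) by (intro bdd_belowI2[where m=0]) auto
  have smallA: "\<exists>P\<in>?C. measure P A < e" if "e > 0" for e
  proof -
    have "(INF P\<in>?C. measure P A) < e" using infd assms(2,3) that by simp
    then show ?thesis using cINF_less_iff[OF C bddbA] by blast
  qed
  have smallAc: "\<exists>P\<in>?C. measure P (-A) < e" if "e > 0" for e
  proof -
    have "1 - e < (SUP P\<in>?C. measure P A)" using assms(4) that unfolding upper_prob_def by simp
    then obtain P where "P \<in> ?C" "1 - e < measure P A" using less_cSUP_iff[OF C bddA] by blast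
    then show ?thesis using compl[OF _ assms(2)] by force
  qed
  have nA: "-A \<in> sets borel" using assms(2) by simp
  have lB: "lp B \<le> measure P B" if "P \<in> ?C" for P using mem(3)[OF that assms(5)] .
  have i1: "(INF P\<in>?C. measure P (A \<inter> B)) = 0"
  proof (rule inf0[OF C])
    show "\<forall>P\<in>?C. 0 \<le> measure P (A \<inter> B)" using bnd by auto
    show "\<forall>e>0. \<exists>P\<in>?C. measure P (A \<inter> B) < e"
      using smallA mono[OF _ assms(2)] by (meson le_less_trans)
  qed
  have i2: "(INF P\<in>?C. measure P (-A \<inter> B)) = 0"
  proof (rule inf0[OF C])
    show "\<forall>P\<in>?C. 0 \<le> measure P (-A \<inter> B)" using bnd by auto
    show "\<forall>e>0. \<exists>P\<in>?C. measure P (-A \<inter> B) < e"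
      using smallAc mono[OF _ nA] by (meson le_less_trans)
  qed
  have g1: "lower_geom lp A B = 0" unfolding lower_geom_def i1 by simp
  have g2: "upper_geom lp A B = 1" unfolding upper_geom_def lower_geom_def i2 by simp
  have b1: "lower_bayes lp A B = 0" unfolding lower_bayes_def
  proof (rule inf0[OF C])
    show "\<forall>P\<in>?C. 0 \<le> measure P (A \<inter> B) / measure P B" using bnd by auto
    show "\<forall>e>0. \<exists>P\<in>?C. measure P (A \<inter> B) / measure P B < e"
    proof (intro allI impI)
      fix e :: real assume e: "e > 0"
      then obtain P where P: "P \<in> ?C" "measure P A < e * lp B" using smallA[of "e * lp B"] assms(6) by auto
      have pB: "measure P B \<ge> lp B" using lB[OF P(1)] .
      have "measure P (A \<inter> B) / measure P B \<le> measure P A / lp B"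
        using mono[OF P(1) assms(2)] pB assms(6) bnd[OF P(1)]
        by (meson frac_le)
      also have "\<dots> < e" using P(2) assms(6) by (simp add: divide_less_eq)
      finally show "\<exists>P\<in>?C. measure P (A \<inter> B) / measure P B < e" using P(1) by blast
    qed
  qed
  have b2: "upper_bayes lp A B = 1" unfolding upper_bayes_def
  proof (rule sup1[OF C])
    show "\<forall>P\<in>?C. measure P (A \<inter> B) / measure P B \<le> 1"
    proof
      fix P assume P: "P \<in> ?C"
      have "measure P (A \<inter> B) \<le> measure P B"
        using mem[OF P] assms(5)
        by (intro finite_measure.finite_measure_mono prob_space.axioms(1)) auto
      then show "measure P (A \<inter> B) / measure P B \<le> 1"
        unfolding divide_le_eq_1 using measure_nonneg[of P B] by linarith
    qed
    show "\<forall>e>0. \<exists>P\<in>?C. 1 - e < measure P (A \<inter> B) / measure P B"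
    proof (intro allI impI)
      fix e :: real assume e: "e > 0"
      then obtain P where P: "P \<in> ?C" "measure P (-A) < e * lp B" using smallAc[of "e * lp B"] assms(6) by auto
      have pB: "measure P B \<ge> lp B" using lB[OF P(1)] .
      then have pB0: "measure P B > 0" using assms(6) by simp
      have dif: "measure P (-A \<inter> B) = measure P B - measure P (A \<inter> B)"
      proof -
        have "-A \<inter> B = B - (A \<inter> B)" by auto
        moreover have "measure P (B - (A \<inter> B)) = measure P B - measure P (A \<inter> B)"
          using mem[OF P(1)] assms(2,5)
          by (intro finite_measure.finite_measure_Diff prob_space.axioms(1)) auto
        ultimately show ?thesis by simp
      qed
      have "measure P (-A \<inter> B) / measure P B \<le> measure P (-A) / lp B"
        using mono[OF P(1) nA] pB assms(6) bnd[OF P(1)]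
        by (meson frac_le)
      also have "\<dots> < e" using P(2) assms(6) by (simp add: divide_less_eq)
      finally have "measure P (-A \<inter> B) / measure P B < e" .
      then have "1 - e < 1 - measure P (-A \<inter> B) / measure P B" by simp
      also have "\<dots> = measure P (A \<inter> B) / measure P B"
        using dif pB0 by (simp add: field_simps)
      finally show "\<exists>P\<in>?C. 1 - e < measure P (A \<inter> B) / measure P B" using P(1) by blast
    qed
  qed
  show ?thesis using g1 g2 b1 b2 by blast
qed

end
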